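(* Let $f:E\to\mathbb{R}$ be $L$-smooth (convexity of $f$ is not assumed), let $x^0\in E$, and consider the iterates of Algorithm AGMsDR (with either Option (a) or Option (b) used at every iteration). Then for every $k\ge 0$, $$A_k f(x^k)\le \min_{x\in E}\psi_k(x)=\psi_k(v^k),$$ and moreover $A_k\ge \frac{k^2}{4L}$.
   Context: $E$ is a finite-dimensional real vector space with a norm $\|\cdot\|$; $E^*$ is its dual, $\langle g,x\rangle$ denotes the value of $g\in E^*$ at $x\in E$, and $\|g\|_*=\max\{\langle g,x\rangle:\|x\|\le 1\}$. For $g\in E^*$, $g^{\#}$ denotes a (fixed) element $s\in E$ with $\|s\|\le 1$ and $\langle g,s\rangle=\|g\|_*$. A prox-function $d:E\to\mathbb{R}$ is continuously differentiable, convex, $1$-strongly convex with respect to $\|\cdot\|$ (i.e. $d(y)-d(x)-\langle\nabla d(x),y-x\rangle\ge\frac12\|y-x\|^2$ for all $x,y\in E$) and satisfies $\min_E d=0$; its Bregman divergence is $V(x,z)=d(x)-d(z)-\langle\nabla d(z),x-z\rangle$. A function $f:E\to\mathbb{R}$ is $L$-smooth ($L>0$) if it is continuously differentiable and $\|\nabla f(x)-\nabla f(y)\|_*\le L\|x-y\|$ for all $x,y\in E$. Algorithm AGMsDR (input $x^0\in E$, and $L$ for Option (a)): set $A_0=0$, $v^0=x^0$, $\psi_0(x)=V(x,x^0)$. For $k=0,1,2,\dots$: 1. Choose $\beta_k\in\arg\min_{\beta\in[0,1]} f(v^k+\beta(x^k-v^k))$ (a global minimizer over the interval) and set $y^k=v^k+\beta_k(x^k-v^k)$.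 2. Option (a): $x^{k+1}\in\arg\min_{x\in E}\{f(y^k)+\langle\nabla f(y^k),x-y^k\rangle+\frac L2\|x-y^k\|^2\}$, and $a_{k+1}>0$ solves $\frac{a_{k+1}^2}{A_k+a_{k+1}}=\frac1L$. Option (b): $h_{k+1}\in\arg\min_{h\ge0} f(y^k-h(\nabla f(y^k))^{\#})$, $x^{k+1}=y^k-h_{k+1}(\nabla f(y^k))^{\#}$, and $a_{k+1}$ is the largest solution of $f(y^k)-\frac{a_{k+1}^2}{2(A_k+a_{k+1})}\|\nabla f(y^k)\|_*^2=f(x^{k+1})$. 3. $A_{k+1}=A_k+a_{k+1}$; $\psi_{k+1}(x)=\psi_k(x)+a_{k+1}\{f(y^k)+\langle\nabla f(y^k),x-y^k\rangle\}$; $v^{k+1}=\arg\min_{x\in E}\psi_{k+1}(x)$. It is assumed that all the minima in the algorithm are attained, and that $\nabla f(y^k)\neq 0$ for all iterations considered (otherwise $y^k$ is a stationary point and the method stops). *)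

theory Defs
  imports "HOL-Analysis.Analysis"
begin

text \<open>The space E is modelled by a type 'a of class euclidean_space (a finite-dimensional
real vector space), carrying an ARBITRARY norm nrm (not necessarily the Euclidean one).
The dual space E^* is identified with 'a via the inner product: g acts as x \<mapsto> g \<bullet> x.\<close>

definition is_norm :: "('a::real_vector \<Rightarrow> real) \<Rightarrow> bool" where
  "is_norm nrm \<longleftrightarrow> (\<forall>x. 0 \<le> nrm x) \<and> (\<forall>x. nrm x = 0 \<longleftrightarrow> x = 0)
     \<and> (\<forall>c x. nrm (c *\<^sub>R x) = \<bar>c\<bar> * nrm x) \<and> (\<forall>x y. nrm (x + y) \<le> nrm x + nrm y)"

definition dual_norm :: "('a::real_inner \<Rightarrow> real) \<Rightarrow> 'a \<Rightarrow> real" where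
  "dual_norm nrm g = Sup {g \<bullet> x | x. nrm x \<le> 1}"

definition is_sharp :: "('a::real_inner \<Rightarrow> real) \<Rightarrow> ('a \<Rightarrow> 'a) \<Rightarrow> bool" where
  "is_sharp nrm sh \<longleftrightarrow> (\<forall>g. nrm (sh g) \<le> 1 \<and> g \<bullet> sh g = dual_norm nrm g)"

definition is_prox :: "('a::euclidean_space \<Rightarrow> real) \<Rightarrow> ('a \<Rightarrow> real) \<Rightarrow> ('a \<Rightarrow> 'a) \<Rightarrow> bool" where
  "is_prox nrm d gd \<longleftrightarrow>
     (\<forall>x. (d has_derivative (\<lambda>h. gd x \<bullet> h)) (at x)) \<and> continuous_on UNIV gd
     \<and> convex_on UNIV d
     \<and> (\<forall>x y. d y - d x - gd x \<bullet> (y - x) \<ge> (1/2) * (nrm (y - x))\<^sup>2)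
     \<and> (\<exists>x. d x = 0) \<and> (\<forall>x. d x \<ge> 0)"

definition bregman :: "('a::real_inner \<Rightarrow> real) \<Rightarrow> ('a \<Rightarrow> 'a) \<Rightarrow> 'a \<Rightarrow> 'a \<Rightarrow> real" where
  "bregman d gd x z = d x - d z - gd z \<bullet> (x - z)"

definition L_smooth :: "('a::euclidean_space \<Rightarrow> real) \<Rightarrow> real \<Rightarrow> ('a \<Rightarrow> real) \<Rightarrow> ('a \<Rightarrow> 'a) \<Rightarrow> bool" where
  "L_smooth nrm L f gf \<longleftrightarrow> L > 0 \<and>
     (\<forall>x. (f has_derivative (\<lambda>h. gf x \<bullet> h)) (at x)) \<and> continuous_on UNIV gf
     \<and> (\<forall>x y. dual_norm nrm (gf x - gf y) \<le> L * nrm (x - y))"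

end

theory Submission
  imports Defs
begin

lemma nrm_sum:
  assumes "is_norm nrm" "finite S"
  shows "nrm (sum f S) \<le> (\<Sum>i\<in>S. nrm (f i))"
  using assms(2)
proof (induction S rule: finite_induct)
  case empty
  have "nrm 0 = 0" using assms(1) unfolding is_norm_def by auto
  then show ?case by simp
next
  case (insert x F)
  have "nrm (sum f (insert x F)) = nrm (f x + sum f F)" using insert by simp
  also have "\<dots> \<le> nrm (f x) + nrm (sum f F)" using assms(1) unfolding is_norm_def by blast
  finally show ?case using insert by simp
qed

lemma nrm_upper:
  fixes nrm :: "'a::euclidean_space \<Rightarrow> real"
  assumes "is_norm nrm"
  shows "\<exists>C. \<forall>x. nrm x \<le> C * norm x"
proof -
  have "nrm x \<le> (\<Sum>b\<in>Basis. nrm b) * norm x" for x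
  proof -
    have "nrm x = nrm (\<Sum>b\<in>Basis. (x \<bullet> b) *\<^sub>R b)" by (simp add: euclidean_representation)
    also have "\<dots> \<le> (\<Sum>b\<in>Basis. nrm ((x \<bullet> b) *\<^sub>R b))" by (rule nrm_sum[OF assms]) simp
    also have "\<dots> = (\<Sum>b\<in>Basis. \<bar>x \<bullet> b\<bar> * nrm b)" using assms unfolding is_norm_def by simp
    also have "\<dots> \<le> (\<Sum>b\<in>Basis. norm x * nrm b)"
      apply (rule sum_mono) apply (rule mult_right_mono)
      using assms unfolding is_norm_def by (auto simp: Basis_le_norm)
    finally show ?thesis by (simp add: sum_distrib_left mult.commute)
  qed
  then show ?thesis by blast
qed

lemma nrm_cont:
  fixes nrm :: "'a::euclidean_space \<Rightarrow> real"
  assumes "is_norm nrm"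
  shows "continuous_on S nrm"
proof -
  obtain C where C: "\<forall>x. nrm x \<le> C * norm x" using nrm_upper[OF assms] by blast
  have tri: "nrm x \<le> nrm y + nrm (x - y)" for x y
    using assms unfolding is_norm_def by (metis add.commute diff_add_cancel)
  have sym: "nrm (x - y) = nrm (y - x)" for x y
    using assms unfolding is_norm_def by (metis abs_minus_cancel abs_one minus_diff_eq mult_1 scaleR_minus1_left)
  have "\<bar>nrm x - nrm y\<bar> \<le> C * norm (x - y)" for x y
    using tri[of x y] tri[of y x] sym[of x y] C[rule_format, of "x - y"] by auto
  then have "isCont nrm x" for x
  proof -
    obtain b :: 'a where b: "b \<in> Basis" using nonempty_Basis by blast
    have "0 \<le> nrm b" using assms unfolding is_norm_def by blast
    also have "\<dots> \<le> C * norm b" using C by blast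
    finally have C0: "C \<ge> 0" using b by simp
    show ?thesis unfolding continuous_at_eps_delta
    proof (intro allI impI)
      fix e :: real assume "e > 0"
      show "\<exists>d>0. \<forall>y. dist y x < d \<longrightarrow> dist (nrm y) (nrm x) < e"
      proof (intro exI[of _ "e / (C + 1)"] conjI allI impI)
        show "e / (C+1) > 0" using \<open>e>0\<close> C0 by simp
        fix y assume "dist y x < e / (C + 1)"
        then have "(C+1) * norm (y - x) < e" using C0 by (simp add: dist_norm field_simps)
        moreover have "\<bar>nrm y - nrm x\<bar> \<le> C * norm (y - x)" by fact
        moreover have "C * norm (y-x) \<le> (C+1) * norm (y-x)" by (simp add: mult_right_mono)
        ultimately show "dist (nrm y) (nrm x) < e" by (simp add: dist_real_def)
      qed
    qed
  qed
  then show ?thesis by (simp add: continuous_at_imp_continuous_on)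
qed

lemma nrm_lower:
  fixes nrm :: "'a::euclidean_space \<Rightarrow> real"
  assumes "is_norm nrm"
  shows "\<exists>m>0. \<forall>x. m * norm x \<le> nrm x"
proof -
  obtain b :: 'a where b: "b \<in> Basis" using nonempty_Basis by blast
  have ne: "sphere (0::'a) 1 \<noteq> {}" using b by (auto intro!: exI[of _ b])
  obtain z where z: "z \<in> sphere (0::'a) 1" "\<forall>y\<in>sphere 0 1. nrm z \<le> nrm y"
    using continuous_attains_inf[OF compact_sphere ne nrm_cont[OF assms]] by blast
  have "z \<noteq> 0" using z by auto
  then have mpos: "nrm z > 0" using assms unfolding is_norm_def by (metis less_eq_real_def)
  have "nrm z * norm x \<le> nrm x" for x
  proof (cases "x = 0")
    case True then show ?thesis using assms unfolding is_norm_def by simp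
  next
    case False
    then have "(1/norm x) *\<^sub>R x \<in> sphere 0 1" by simp
    then have "nrm z \<le> nrm ((1/norm x) *\<^sub>R x)" using z by blast
    also have "\<dots> = nrm x / norm x" using assms unfolding is_norm_def by simp
    finally show ?thesis using False by (simp add: field_simps)
  qed
  then show ?thesis using mpos by blast
qed

lemma dual_bdd:
  fixes nrm :: "'a::euclidean_space \<Rightarrow> real"
  assumes "is_norm nrm"
  shows "bdd_above {g \<bullet> x | x. nrm x \<le> 1}"
proof -
  obtain m where m: "m > 0" "\<forall>x. m * norm x \<le> nrm x" using nrm_lower[OF assms] by blast
  have "g \<bullet> x \<le> norm g / m" if "nrm x \<le> 1" for x
  proof -
    have "norm x \<le> 1 / m" using m(2)[rule_format, of x] that m(1) by (simp add: field_simps)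
    have "g \<bullet> x \<le> norm g * norm x" using Cauchy_Schwarz_ineq2[of g x] by simp
    also have "\<dots> \<le> norm g * (1/m)" by (rule mult_left_mono) (fact, simp)
    finally show ?thesis by simp
  qed
  then show ?thesis unfolding bdd_above_def by blast
qed

lemma dual_nonneg:
  fixes nrm :: "'a::euclidean_space \<Rightarrow> real"
  assumes "is_norm nrm"
  shows "0 \<le> dual_norm nrm g"
proof -
  have "nrm 0 = 0" using assms unfolding is_norm_def by blast
  then have "nrm 0 \<le> 1" by simp
  then have "g \<bullet> 0 \<in> {g \<bullet> x | x. nrm x \<le> 1}" by blast
  then show ?thesis unfolding dual_norm_def using cSup_upper[OF _ dual_bdd[OF assms]] by fastforce
qed

lemma dual_le:
  fixes nrm :: "'a::euclidean_space \<Rightarrow> real"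
  assumes "is_norm nrm"
  shows "g \<bullet> w \<le> dual_norm nrm g * nrm w"
proof (cases "w = 0")
  case True then show ?thesis using dual_nonneg[OF assms] assms unfolding is_norm_def by simp
next
  case False
  then have np: "nrm w > 0" using assms False unfolding is_norm_def by (metis less_eq_real_def)
  have "nrm ((1 / nrm w) *\<^sub>R w) = 1" using np False assms unfolding is_norm_def by simp
  then have "g \<bullet> ((1 / nrm w) *\<^sub>R w) \<in> {g \<bullet> x | x. nrm x \<le> 1}" by fastforce
  then have "g \<bullet> ((1 / nrm w) *\<^sub>R w) \<le> dual_norm nrm g"
    unfolding dual_norm_def using cSup_upper[OF _ dual_bdd[OF assms]] by blast
  then show ?thesis using np by (simp add: field_simps)
qed

lemma dual_pos:
  fixes nrm :: "'a::euclidean_space \<Rightarrow> real"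
  assumes "is_norm nrm" "g \<noteq> 0"
  shows "0 < dual_norm nrm g"
proof -
  have np: "nrm g > 0" using assms unfolding is_norm_def by (metis less_eq_real_def)
  have "0 < g \<bullet> g" using assms(2) by simp
  also have "\<dots> \<le> dual_norm nrm g * nrm g" by (rule dual_le[OF assms(1)])
  finally show ?thesis using np by (simp add: zero_less_mult_iff)
qed

lemma line_deriv:
  fixes f :: "'a::euclidean_space \<Rightarrow> real"
  assumes "(f has_derivative (\<lambda>h. G \<bullet> h)) (at (y + t *\<^sub>R w))"
  shows "((\<lambda>s. f (y + s *\<^sub>R w)) has_real_derivative (G \<bullet> w)) (at t)"
proof -
  have "((\<lambda>s. y + s *\<^sub>R w) has_derivative (\<lambda>h. h *\<^sub>R w)) (at t)"
    by (auto intro!: derivative_eq_intros)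
  from has_derivative_compose[OF this assms]
  have "((\<lambda>s. f (y + s *\<^sub>R w)) has_derivative (\<lambda>h. G \<bullet> (h *\<^sub>R w))) (at t)" .
  moreover have "(\<lambda>h. G \<bullet> (h *\<^sub>R w)) = (*) (G \<bullet> w)" by (auto simp: mult.commute)
  ultimately show ?thesis unfolding has_field_derivative_def by simp
qed

lemma descent:
  fixes f :: "'a::euclidean_space \<Rightarrow> real"
  assumes norm: "is_norm nrm" and sm: "L_smooth nrm L f gf"
  shows "f x \<le> f y + gf y \<bullet> (x - y) + L / 2 * (nrm (x - y))\<^sup>2"
proof -
  define w where "w = x - y"
  define \<phi> where "\<phi> t = f (y + t *\<^sub>R w) - t * (gf y \<bullet> w) - L / 2 * t\<^sup>2 * (nrm w)\<^sup>2" for t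
  have fd: "(f has_derivative (\<lambda>h. gf p \<bullet> h)) (at p)" for p using sm unfolding L_smooth_def by blast
  have D: "(\<phi> has_real_derivative (gf (y + t *\<^sub>R w) \<bullet> w - gf y \<bullet> w - L * t * (nrm w)\<^sup>2)) (at t)" for t
    unfolding \<phi>_def
    by (rule derivative_eq_intros line_deriv fd refl)+ (simp add: power2_eq_square algebra_simps)
  have "\<phi> 1 \<le> \<phi> 0"
  proof (rule DERIV_nonpos_imp_decreasing_open[of 0 1])
    show "continuous_on {0..1} \<phi>" using D by (meson DERIV_isCont continuous_at_imp_continuous_on)
    fix t :: real assume t: "0 < t" "t < 1"
    have "gf (y + t *\<^sub>R w) \<bullet> w - gf y \<bullet> w = (gf (y + t *\<^sub>R w) - gf y) \<bullet> w" by (simp add: inner_diff_left)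
    also have "\<dots> \<le> dual_norm nrm (gf (y + t *\<^sub>R w) - gf y) * nrm w" by (rule dual_le[OF norm])
    also have "\<dots> \<le> (L * nrm (t *\<^sub>R w)) * nrm w"
    proof (rule mult_right_mono)
      have "dual_norm nrm (gf (y + t *\<^sub>R w) - gf y) \<le> L * nrm ((y + t *\<^sub>R w) - y)"
        using sm unfolding L_smooth_def by blast
      then show "dual_norm nrm (gf (y + t *\<^sub>R w) - gf y) \<le> L * nrm (t *\<^sub>R w)" by simp
      show "0 \<le> nrm w" using norm unfolding is_norm_def by blast
    qed
    also have "\<dots> = L * t * (nrm w)\<^sup>2" using norm t unfolding is_norm_def by (simp add: power2_eq_square)
    finally show "\<exists>d. (\<phi> has_real_derivative d) (at t) \<and> d \<le> 0" using D[of t] by (intro exI[of _ "gf (y + t *\<^sub>R w) \<bullet> w - gf y \<bullet> w - L * t * (nrm w)\<^sup>2"]) auto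
  qed simp
  then show ?thesis unfolding \<phi>_def w_def by simp
qed

lemma sharp_descent:
  fixes f :: "'a::euclidean_space \<Rightarrow> real"
  assumes norm: "is_norm nrm" and sm: "L_smooth nrm L f gf" and sh: "is_sharp nrm sh" and t: "t \<ge> 0"
  shows "f (y - t *\<^sub>R sh (gf y)) \<le> f y - t * dual_norm nrm (gf y) + L / 2 * t\<^sup>2"
proof -
  have "f (y - t *\<^sub>R sh (gf y)) \<le> f y + gf y \<bullet> (- t *\<^sub>R sh (gf y)) + L / 2 * (nrm (- t *\<^sub>R sh (gf y)))\<^sup>2"
    using descent[OF norm sm, of "y - t *\<^sub>R sh (gf y)" y] by simp
  also have "gf y \<bullet> (- t *\<^sub>R sh (gf y)) = - t * dual_norm nrm (gf y)" using sh unfolding is_sharp_def by simp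
  also have "nrm (- t *\<^sub>R sh (gf y)) = t * nrm (sh (gf y))"
  proof -
    have "nrm ((- t) *\<^sub>R sh (gf y)) = \<bar>- t\<bar> * nrm (sh (gf y))" using norm unfolding is_norm_def by blast
    then show ?thesis using t by simp
  qed
  also have "(t * nrm (sh (gf y)))\<^sup>2 \<le> t\<^sup>2" 
  proof -
    have "0 \<le> nrm (sh (gf y))" "nrm (sh (gf y)) \<le> 1" using norm sh unfolding is_norm_def is_sharp_def by auto
    then have "t * nrm (sh (gf y)) \<le> t" "0 \<le> t * nrm (sh (gf y))" using t by (auto simp: mult_left_le)
    then show ?thesis by (simp add: power_mono)
  qed
  then have "L / 2 * (t * nrm (sh (gf y)))\<^sup>2 \<le> L / 2 * t\<^sup>2" using sm unfolding L_smooth_def by simp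
  finally show ?thesis by simp
qed

lemma descent_opt:
  fixes f :: "'a::euclidean_space \<Rightarrow> real"
  assumes norm: "is_norm nrm" and sm: "L_smooth nrm L f gf" and sh: "is_sharp nrm sh"
  shows "f y - (dual_norm nrm (gf y))\<^sup>2 / (2 * L) = f y - (dual_norm nrm (gf y) / L) * dual_norm nrm (gf y) + L / 2 * (dual_norm nrm (gf y) / L)\<^sup>2"
  using sm unfolding L_smooth_def by (simp add: power2_eq_square field_simps)

lemma dir_deriv_nonneg:
  fixes \<phi> :: "real \<Rightarrow> real"
  assumes "(\<phi> has_real_derivative l) (at 0)" "\<And>s. 0 \<le> s \<Longrightarrow> s \<le> 1 \<Longrightarrow> \<phi> 0 \<le> \<phi> s"
  shows "0 \<le> l"
proof (rule ccontr)
  assume "\<not> 0 \<le> l"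
  then obtain d where d: "d > 0" "\<forall>h>0. h < d \<longrightarrow> \<phi> 0 > \<phi> (0 + h)"
    using DERIV_neg_dec_right[OF assms(1)] by force
  define h where "h = min (d/2) 1"
  have "h > 0" "h < d" "h \<le> 1" using d unfolding h_def by auto
  then show False using d(2) assms(2)[of h] by force
qed

lemma quad_sharp:
  fixes G :: "'a::euclidean_space"
  assumes norm: "is_norm nrm" and sh: "is_sharp nrm sh" and t: "t \<ge> 0" and L: "L > 0"
  shows "G \<bullet> (- t *\<^sub>R sh G) + L / 2 * (nrm (- t *\<^sub>R sh G))\<^sup>2 \<le> - t * dual_norm nrm G + L / 2 * t\<^sup>2"
proof -
  have e1: "G \<bullet> (- t *\<^sub>R sh G) = - t * dual_norm nrm G" using sh unfolding is_sharp_def by simp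
  have e2: "nrm (- t *\<^sub>R sh G) = t * nrm (sh G)"
  proof -
    have "nrm ((- t) *\<^sub>R sh G) = \<bar>- t\<bar> * nrm (sh G)" using norm unfolding is_norm_def by blast
    then show ?thesis using t by simp
  qed
  have "(t * nrm (sh G))\<^sup>2 \<le> t\<^sup>2" 
  proof -
    have "0 \<le> nrm (sh G)" "nrm (sh G) \<le> 1" using norm sh unfolding is_norm_def is_sharp_def by auto
    then have "t * nrm (sh G) \<le> t" "0 \<le> t * nrm (sh G)" using t by (auto simp: mult_left_le)
    then show ?thesis by (simp add: power_mono)
  qed
  then have "L / 2 * (t * nrm (sh G))\<^sup>2 \<le> L / 2 * t\<^sup>2" using L by simp
  moreover have "G \<bullet> (- t *\<^sub>R sh G) + L / 2 * (nrm (- t *\<^sub>R sh G))\<^sup>2 = - t * dual_norm nrm G + L / 2 * (t * nrm (sh G))\<^sup>2"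
    by (simp only: e1 e2)
  ultimately show ?thesis by linarith
qed

lemma min_quad:
  fixes a D n :: real
  assumes "0 \<le> a" "0 \<le> D" "0 \<le> n"
  shows "- (a\<^sup>2 * D\<^sup>2 / 2) \<le> 1/2 * n\<^sup>2 - a * D * n"
proof -
  have "0 \<le> (n - a * D)\<^sup>2" by (rule zero_le_power2)
  then show ?thesis by (simp add: power2_eq_square algebra_simps)
qed

theorem mainTheorem1:
  fixes nrm :: "'a::euclidean_space \<Rightarrow> real"
    and sh :: "'a \<Rightarrow> 'a"
    and d :: "'a \<Rightarrow> real" and gd :: "'a \<Rightarrow> 'a"
    and f :: "'a \<Rightarrow> real" and gf :: "'a \<Rightarrow> 'a" and L :: real
    and x v y :: "nat \<Rightarrow> 'a"
    and A a \<beta> h :: "nat \<Rightarrow> real"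
    and \<psi> :: "nat \<Rightarrow> 'a \<Rightarrow> real"
  assumes norm: "is_norm nrm"
    and sharp: "is_sharp nrm sh"
    and prox: "is_prox nrm d gd"
    and smooth: "L_smooth nrm L f gf"
    and A0: "A 0 = 0"
    and v0: "v 0 = x 0"
    and psi0: "\<psi> 0 = (\<lambda>z. bregman d gd z (x 0))"
    and beta: "\<And>k. 0 \<le> \<beta> k \<and> \<beta> k \<le> 1 \<and>
                 (\<forall>b. 0 \<le> b \<and> b \<le> 1 \<longrightarrow>
                    f (v k + \<beta> k *\<^sub>R (x k - v k)) \<le> f (v k + b *\<^sub>R (x k - v k)))"
    and ydef: "\<And>k. y k = v k + \<beta> k *\<^sub>R (x k - v k)"
    and nonstat: "\<And>k. gf (y k) \<noteq> 0"
    and options: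
      "(\<forall>k. (\<forall>z. f (y k) + gf (y k) \<bullet> (x (Suc k) - y k) + L / 2 * (nrm (x (Suc k) - y k))\<^sup>2
                 \<le> f (y k) + gf (y k) \<bullet> (z - y k) + L / 2 * (nrm (z - y k))\<^sup>2)
             \<and> a (Suc k) > 0 \<and> (a (Suc k))\<^sup>2 / (A k + a (Suc k)) = 1 / L)
       \<or>
       (\<forall>k. h (Suc k) \<ge> 0
             \<and> (\<forall>t. t \<ge> 0 \<longrightarrow> f (y k - h (Suc k) *\<^sub>R sh (gf (y k))) \<le> f (y k - t *\<^sub>R sh (gf (y k))))
             \<and> x (Suc k) = y k - h (Suc k) *\<^sub>R sh (gf (y k))
             \<and> f (y k) - (a (Suc k))\<^sup>2 / (2 * (A k + a (Suc k))) * (dual_norm nrm (gf (y k)))\<^sup>2 = f (x (Suc k))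
             \<and> (\<forall>b. f (y k) - b\<^sup>2 / (2 * (A k + b)) * (dual_norm nrm (gf (y k)))\<^sup>2 = f (x (Suc k))
                    \<longrightarrow> b \<le> a (Suc k)))"
    and Asuc: "\<And>k. A (Suc k) = A k + a (Suc k)"
    and psisuc: "\<And>k. \<psi> (Suc k) = (\<lambda>z. \<psi> k z + a (Suc k) * (f (y k) + gf (y k) \<bullet> (z - y k)))"
    and vsuc: "\<And>k. \<forall>z. \<psi> (Suc k) (v (Suc k)) \<le> \<psi> (Suc k) z"
  shows "\<forall>k. A k * f (x k) \<le> \<psi> k (v k) \<and> \<psi> k (v k) = (INF z. \<psi> k z)
             \<and> A k \<ge> real k ^ 2 / (4 * L)"
proof -
  have Lpos: "L > 0" using smooth unfolding L_smooth_def by blast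
  have fd: "\<And>p. (f has_derivative (\<lambda>h. gf p \<bullet> h)) (at p)" using smooth unfolding L_smooth_def by blast
  have dd: "\<And>p. (d has_derivative (\<lambda>h. gd p \<bullet> h)) (at p)" using prox unfolding is_prox_def by blast
  have sc: "\<And>p q. d q - d p - gd p \<bullet> (q - p) \<ge> (1/2) * (nrm (q - p))\<^sup>2" using prox unfolding is_prox_def by blast
  have nneg: "\<And>p. 0 \<le> nrm p" using norm unfolding is_norm_def by blast
  have nminus: "\<And>p. nrm (- p) = nrm p"
  proof -
    fix p
    have "nrm ((-1) *\<^sub>R p) = \<bar>-1\<bar> * nrm p" using norm unfolding is_norm_def by blast
    then show "nrm (- p) = nrm p" by simp
  qed
  have form: "\<exists>c G. \<forall>z. \<psi> k z = d z + c + G \<bullet> z" for k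
  proof (induction k)
    case 0
    show ?case
      by (rule exI[of _ "- d (x 0) + gd (x 0) \<bullet> x 0"], rule exI[of _ "- gd (x 0)"])
        (simp add: psi0 bregman_def inner_diff_right)
  next
    case (Suc k)
    then obtain c G where cG: "\<forall>z. \<psi> k z = d z + c + G \<bullet> z" by blast
    show ?case
      by (rule exI[of _ "c + a (Suc k) * f (y k) - a (Suc k) * (gf (y k) \<bullet> y k)"],
          rule exI[of _ "G + a (Suc k) *\<^sub>R gf (y k)"])
        (simp add: psisuc cG inner_diff_right inner_add_left algebra_simps)
  qed
  have qg: "\<psi> k (v k) + 1/2 * (nrm (z - v k))\<^sup>2 \<le> \<psi> k z" for k z
  proof (cases k)
    case 0
    have "\<psi> 0 (v 0) = 0" by (simp add: psi0 v0 bregman_def)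
    moreover have "1/2 * (nrm (z - v 0))\<^sup>2 \<le> \<psi> 0 z" using sc[where p="x 0" and q=z] by (simp add: psi0 v0 bregman_def)
    ultimately show ?thesis using 0 by simp
  next
    case (Suc j)
    obtain c G where cG: "\<forall>z. \<psi> k z = d z + c + G \<bullet> z" using form by blast
    then have psieq: "\<psi> k = (\<lambda>z. d z + c + G \<bullet> z)" by auto
    have der: "((\<lambda>z. d z + c + G \<bullet> z) has_derivative (\<lambda>h. gd (v k) \<bullet> h + 0 + G \<bullet> h)) (at (v k))"
      by (intro has_derivative_add dd has_derivative_const has_derivative_inner_right has_derivative_ident)
    have "\<forall>z. \<psi> k (v k) \<le> \<psi> k z" using vsuc Suc by blast
    then have "(\<lambda>h. gd (v k) \<bullet> h + 0 + G \<bullet> h) = (\<lambda>h. 0)"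
      using differential_zero_maxmin[of "v k" UNIV _ _] der psieq by auto
    from fun_cong[OF this, of "gd (v k) + G"]
    have "gd (v k) \<bullet> (gd (v k) + G) + G \<bullet> (gd (v k) + G) = 0" by simp
    then have "(gd (v k) + G) \<bullet> (gd (v k) + G) = 0" by (simp add: inner_add_left)
    then have G: "G = - gd (v k)" by (simp add: add_eq_0_iff)
    have "\<psi> k z - \<psi> k (v k) = d z - d (v k) - gd (v k) \<bullet> (z - v k)"
      using cG G by (simp add: inner_diff_right)
    then show ?thesis using sc[where p="v k" and q=z] by simp
  qed
  have inf: "\<psi> k (v k) = (INF z. \<psi> k z)" for k
  proof -
    have "\<psi> k (v k) \<le> \<psi> k z" for z using qg[of k z] zero_le_power2[of "nrm (z - v k)"] by linarith
    then show ?thesis by (intro cInf_eq_minimum[symmetric]) auto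
  qed
  have step: "0 < a (Suc k) \<and> A (Suc k) \<le> L * (a (Suc k))\<^sup>2 \<and>
      f (x (Suc k)) \<le> f (y k) - (a (Suc k))\<^sup>2 / (2 * A (Suc k)) * (dual_norm nrm (gf (y k)))\<^sup>2"
    if Ak: "A k \<ge> 0" for k
  proof -
    define g where "g = gf (y k)"
    define D where "D = dual_norm nrm g"
    have Dpos: "D > 0" unfolding D_def g_def using dual_pos[OF norm nonstat] .
    define t where "t = D / L"
    have t0: "t \<ge> 0" using Dpos Lpos unfolding t_def by simp
    have tval: "- t * D + L / 2 * t\<^sup>2 = - D\<^sup>2 / (2 * L)" unfolding t_def using Lpos
      by (simp add: power2_eq_square field_simps)
    from options show ?thesis
    proof
      assume oa: "\<forall>k. (\<forall>z. f (y k) + gf (y k) \<bullet> (x (Suc k) - y k) + L / 2 * (nrm (x (Suc k) - y k))\<^sup>2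
                 \<le> f (y k) + gf (y k) \<bullet> (z - y k) + L / 2 * (nrm (z - y k))\<^sup>2)
             \<and> a (Suc k) > 0 \<and> (a (Suc k))\<^sup>2 / (A k + a (Suc k)) = 1 / L"
      then have apos: "a (Suc k) > 0" and aeq: "(a (Suc k))\<^sup>2 / (A k + a (Suc k)) = 1 / L"
        and xmin: "\<And>z. f (y k) + g \<bullet> (x (Suc k) - y k) + L / 2 * (nrm (x (Suc k) - y k))\<^sup>2
                 \<le> f (y k) + g \<bullet> (z - y k) + L / 2 * (nrm (z - y k))\<^sup>2" unfolding g_def by blast+
      have Apos: "A k + a (Suc k) > 0" using apos Ak by simp
      have a2: "(a (Suc k))\<^sup>2 = (A k + a (Suc k)) / L" using aeq Apos Lpos by (simp add: field_simps)
      have "f (x (Suc k)) \<le> f (y k) + g \<bullet> (x (Suc k) - y k) + L / 2 * (nrm (x (Suc k) - y k))\<^sup>2"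
        unfolding g_def by (rule descent[OF norm smooth])
      also have "\<dots> \<le> f (y k) + g \<bullet> ((y k - t *\<^sub>R sh g) - y k) + L / 2 * (nrm ((y k - t *\<^sub>R sh g) - y k))\<^sup>2"
        by (rule xmin)
      also have "\<dots> = f (y k) + (g \<bullet> (- t *\<^sub>R sh g) + L / 2 * (nrm (- t *\<^sub>R sh g))\<^sup>2)" by simp
      also have "\<dots> \<le> f (y k) + (- t * D + L / 2 * t\<^sup>2)"
        using quad_sharp[OF norm sharp t0 Lpos, of g] unfolding D_def by simp
      finally have fx: "f (x (Suc k)) \<le> f (y k) - D\<^sup>2 / (2 * L)" using tval by simp
      have "(a (Suc k))\<^sup>2 / (2 * A (Suc k)) = 1 / (2 * L)" using a2 Asuc[of k] Apos Lpos by (simp add: field_simps)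
      then have r: "(a (Suc k))\<^sup>2 / (2 * A (Suc k)) * D\<^sup>2 = D\<^sup>2 / (2 * L)" by simp
      have "A (Suc k) \<le> L * (a (Suc k))\<^sup>2" using a2 Asuc[of k] Lpos by simp
      moreover have "f (x (Suc k)) \<le> f (y k) - (a (Suc k))\<^sup>2 / (2 * A (Suc k)) * D\<^sup>2" using r fx by linarith
      ultimately show ?thesis using apos unfolding D_def g_def by simp
    next
      assume ob: "\<forall>k. h (Suc k) \<ge> 0
             \<and> (\<forall>t. t \<ge> 0 \<longrightarrow> f (y k - h (Suc k) *\<^sub>R sh (gf (y k))) \<le> f (y k - t *\<^sub>R sh (gf (y k))))
             \<and> x (Suc k) = y k - h (Suc k) *\<^sub>R sh (gf (y k))
             \<and> f (y k) - (a (Suc k))\<^sup>2 / (2 * (A k + a (Suc k))) * (dual_norm nrm (gf (y k)))\<^sup>2 = f (x (Suc k))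
             \<and> (\<forall>b. f (y k) - b\<^sup>2 / (2 * (A k + b)) * (dual_norm nrm (gf (y k)))\<^sup>2 = f (x (Suc k))
                    \<longrightarrow> b \<le> a (Suc k))"
      then have ls: "f (x (Suc k)) \<le> f (y k - t *\<^sub>R sh g)"
        and aeq: "f (y k) - (a (Suc k))\<^sup>2 / (2 * (A k + a (Suc k))) * D\<^sup>2 = f (x (Suc k))"
        and alarge: "\<And>b. f (y k) - b\<^sup>2 / (2 * (A k + b)) * D\<^sup>2 = f (x (Suc k)) \<Longrightarrow> b \<le> a (Suc k)"
        unfolding g_def D_def using t0 by metis+
      have "f (y k - t *\<^sub>R sh g) \<le> f (y k) - t * D + L / 2 * t\<^sup>2"
        unfolding g_def D_def by (rule sharp_descent[OF norm smooth sharp t0])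
      then have fx: "f (x (Suc k)) \<le> f (y k) - D\<^sup>2 / (2 * L)" using ls tval by simp
      define \<delta> where "\<delta> = f (y k) - f (x (Suc k))"
      have \<delta>: "\<delta> \<ge> D\<^sup>2 / (2 * L)" using fx unfolding \<delta>_def by simp
      define c where "c = 2 * \<delta> / D\<^sup>2"
      have c1: "c \<ge> 1 / L" using \<delta> Dpos Lpos unfolding c_def by (simp add: field_simps)
      then have cpos: "c > 0" using Lpos by (smt (verit) divide_pos_pos)
      define b where "b = (c + sqrt (c\<^sup>2 + 4 * c * A k)) / 2"
      have sq: "(sqrt (c\<^sup>2 + 4 * c * A k))\<^sup>2 = c\<^sup>2 + 4 * c * A k" using cpos Ak by simp
      have sq0: "0 \<le> sqrt (c\<^sup>2 + 4 * c * A k)" using cpos Ak by simp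
      have bpos: "b > 0" unfolding b_def using add_pos_nonneg[OF cpos sq0] by simp
      have b2: "b\<^sup>2 = c * (A k + b)" unfolding b_def using sq by (simp add: power2_eq_square algebra_simps)
      have "b\<^sup>2 / (2 * (A k + b)) * D\<^sup>2 = \<delta>"
        using b2 bpos Ak Dpos unfolding c_def by (simp add: field_simps)
      then have "b \<le> a (Suc k)" using alarge unfolding \<delta>_def by simp
      then have apos: "a (Suc k) > 0" using bpos by simp
      have Apos: "A k + a (Suc k) > 0" using apos Ak by simp
      have "(a (Suc k))\<^sup>2 / (2 * (A k + a (Suc k))) * D\<^sup>2 = \<delta>" using aeq unfolding \<delta>_def by simp
      then have "(a (Suc k))\<^sup>2 = c * (A k + a (Suc k))" using Apos Dpos unfolding c_def by (simp add: field_simps)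
      moreover have "(A k + a (Suc k)) / L \<le> c * (A k + a (Suc k))"
        using mult_left_mono[OF c1, of "A k + a (Suc k)"] Apos by (simp add: mult.commute)
      ultimately have "A (Suc k) \<le> L * (a (Suc k))\<^sup>2" using Asuc[of k] Lpos by (simp add: field_simps)
      then show ?thesis using apos aeq Asuc[of k] unfolding D_def g_def by simp
    qed
  qed
  have dirg: "0 \<le> gf (y k) \<bullet> (v k - y k)" for k
  proof -
    define w where "w = v k - y k"
    have der: "((\<lambda>s. f (y k + s *\<^sub>R w)) has_real_derivative (gf (y k) \<bullet> w)) (at 0)"
      using line_deriv[of f "gf (y k)" "y k" 0 w] fd[of "y k"] by simp
    have "(\<lambda>s. f (y k + s *\<^sub>R w)) 0 \<le> (\<lambda>s. f (y k + s *\<^sub>R w)) s" if "0 \<le> s" "s \<le> 1" for s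
    proof -
      have e: "y k + s *\<^sub>R w = v k + ((1 - s) * \<beta> k) *\<^sub>R (x k - v k)"
        unfolding w_def ydef by (simp add: algebra_simps)
      have "0 \<le> (1 - s) * \<beta> k" "(1 - s) * \<beta> k \<le> 1" using beta[of k] that by (auto simp: mult_le_one)
      then have "f (v k + \<beta> k *\<^sub>R (x k - v k)) \<le> f (v k + ((1 - s) * \<beta> k) *\<^sub>R (x k - v k))"
        using beta[of k] by blast
      moreover have h1: "f (y k + s *\<^sub>R w) = f (v k + ((1 - s) * \<beta> k) *\<^sub>R (x k - v k))" by (simp only: e)
      moreover have h2: "f (y k + 0 *\<^sub>R w) = f (v k + \<beta> k *\<^sub>R (x k - v k))" by (simp add: ydef[of k])
      ultimately have "f (y k + 0 *\<^sub>R w) \<le> f (y k + s *\<^sub>R w)" by linarith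
      then show ?thesis by (simp only:)
    qed
    then show ?thesis using dir_deriv_nonneg[OF der] unfolding w_def by blast
  qed
  have main: "A k \<ge> 0 \<and> A k * f (x k) \<le> \<psi> k (v k) \<and> real k / (2 * sqrt L) \<le> sqrt (A k)" for k
  proof (induction k)
    case 0 show ?case using A0 by (simp add: psi0 v0 bregman_def)
  next
    case (Suc k)
    then have Ak: "A k \<ge> 0" and IH: "A k * f (x k) \<le> \<psi> k (v k)" and IHs: "real k / (2 * sqrt L) \<le> sqrt (A k)" by auto
    define g where "g = gf (y k)"
    define D where "D = dual_norm nrm g"
    define a' where "a' = a (Suc k)"
    define A' where "A' = A (Suc k)"
    define n where "n = nrm (v (Suc k) - v k)"
    have apos: "0 < a'" and AL: "A' \<le> L * a'\<^sup>2" and fx: "f (x (Suc k)) \<le> f (y k) - a'\<^sup>2 / (2 * A') * D\<^sup>2"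
      using step[OF Ak] unfolding a'_def A'_def D_def g_def by auto
    have AA: "A' = A k + a'" unfolding A'_def a'_def by (rule Asuc)
    have A'pos: "A' > 0" using AA apos Ak by simp
    have fyx: "f (y k) \<le> f (x k)"
    proof -
      have "f (v k + \<beta> k *\<^sub>R (x k - v k)) \<le> f (v k + 1 *\<^sub>R (x k - v k))"
        using beta[of k] zero_le_one order_refl by blast
      then show ?thesis using ydef[of k] by simp
    qed
    have q: "\<psi> k (v k) + 1/2 * n\<^sup>2 \<le> \<psi> k (v (Suc k))" unfolding n_def by (rule qg)
    have ps: "\<psi> (Suc k) (v (Suc k)) = \<psi> k (v (Suc k)) + a' * f (y k) + a' * (g \<bullet> (v k - y k)) + a' * (g \<bullet> (v (Suc k) - v k))"
      by (simp add: psisuc g_def a'_def inner_diff_right algebra_simps)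
    have gl: "- (D * n) \<le> g \<bullet> (v (Suc k) - v k)"
    proof -
      have "g \<bullet> (- (v (Suc k) - v k)) \<le> D * nrm (- (v (Suc k) - v k))" unfolding D_def by (rule dual_le[OF norm])
      then have "- (g \<bullet> (v (Suc k) - v k)) \<le> D * n" unfolding n_def nminus by (simp only: inner_minus_right)
      then show ?thesis by linarith
    qed
    have t1: "0 \<le> a' * (g \<bullet> (v k - y k))" using apos dirg[of k] unfolding g_def by simp
    have t2: "a' * (- (D * n)) \<le> a' * (g \<bullet> (v (Suc k) - v k))" using mult_left_mono[OF gl, of a'] apos by simp
    have mq: "- (a'\<^sup>2 * D\<^sup>2 / 2) \<le> 1/2 * n\<^sup>2 - a' * D * n"
      using min_quad[of a' D n] apos dual_nonneg[OF norm, of g] nneg[of "v (Suc k) - v k"] unfolding D_def n_def by simp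
    have Afy: "A k * f (y k) \<le> A k * f (x k)" using mult_left_mono[OF fyx Ak] .
    have fin: "A' * f (x (Suc k)) \<le> A' * f (y k) - a'\<^sup>2 * D\<^sup>2 / 2"
    proof -
      have "A' * f (x (Suc k)) \<le> A' * (f (y k) - a'\<^sup>2 / (2 * A') * D\<^sup>2)" using mult_left_mono[OF fx] A'pos by simp
      also have "\<dots> = A' * f (y k) - a'\<^sup>2 * D\<^sup>2 / 2" using A'pos by (simp add: field_simps)
      finally show ?thesis .
    qed
    have AF: "A' * f (y k) = A k * f (y k) + a' * f (y k)" using AA by (simp add: distrib_right)
    have t2': "a' * (- (D * n)) = - (a' * D * n)" by simp
    have val: "A' * f (x (Suc k)) \<le> \<psi> (Suc k) (v (Suc k))"
      using ps q IH Afy t1 t2 t2' mq fin AF by linarith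
    define s where "s = sqrt (A k)"
    define s' where "s' = sqrt A'"
    have s'pos: "s' > 0" unfolding s'_def using A'pos by simp
    have ss: "s \<le> s'" unfolding s_def s'_def using AA apos by simp
    have s0: "0 \<le> s" unfolding s_def using Ak by simp
    have sqL: "sqrt L > 0" using Lpos by simp
    have "A' / L \<le> a'\<^sup>2" using AL Lpos by (simp add: pos_divide_le_eq mult.commute)
    then have "sqrt (A' / L) \<le> sqrt (a'\<^sup>2)" by (rule real_sqrt_le_mono)
    then have age: "s' / sqrt L \<le> a'" unfolding s'_def using apos by (simp add: real_sqrt_divide)
    have aeq: "a' = (s' - s) * (s' + s)"
      using AA Ak A'pos unfolding s_def s'_def by (simp add: algebra_simps power2_eq_square[symmetric])
    have "(s' - s) * (s' + s) \<le> (s' - s) * (2 * s')" using ss by (intro mult_left_mono) auto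
    then have "s' * (1 / sqrt L) \<le> s' * (2 * (s' - s))" using age aeq by (simp add: algebra_simps)
    then have "1 / sqrt L \<le> 2 * (s' - s)" using s'pos by (rule mult_left_le_imp_le)
    then have inc: "1 / (2 * sqrt L) \<le> s' - s" by simp
    have "real (Suc k) / (2 * sqrt L) = real k / (2 * sqrt L) + 1 / (2 * sqrt L)" by (simp add: add_divide_distrib)
    also have "\<dots> \<le> s'" using IHs inc unfolding s_def by simp
    finally have gr: "real (Suc k) / (2 * sqrt L) \<le> sqrt (A (Suc k))" unfolding s'_def A'_def .
    show ?case using val gr A'pos unfolding A'_def by simp
  qed
  show ?thesis
  proof (intro allI conjI)
    fix k
    show "A k * f (x k) \<le> \<psi> k (v k)" using main[of k] by simp
    show "\<psi> k (v k) = (INF z. \<psi> k z)" by (rule inf)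
    have Ak: "A k \<ge> 0" using main[of k] by simp
    have b: "real k / (2 * sqrt L) \<le> sqrt (A k)" using main[of k] by simp
    have "(real k / (2 * sqrt L))\<^sup>2 \<le> (sqrt (A k))\<^sup>2"
      by (rule power_mono[OF b]) (use Lpos in simp)
    also have "\<dots> = A k" using Ak by simp
    finally show "A k \<ge> real k ^ 2 / (4 * L)" using Lpos by (simp add: power_divide power_mult_distrib)
  qed
qed

end
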